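(* In the simplified model with conditional inclusion lists, regardless of the payment rule, if $$B_1> f_{BP}+ r\cdot s\cdot\max\{c_{block}-w+1,\ 0\},$$ then censoring $t_0$ (omitting it from the block, while keeping the block approved) is a dominant strategy for the block producer; consequently there is no Nash equilibrium in which $t_0$ is included in the block.
   Context: Simplified model (single slot, complete information, Nash equilibrium). Players: a block producer and $m$ includers with distinct orders $1,\dots,m$. A mempool $M$ of $w$ user transactions, each of size $s>0$; $t_0\in M$ is a target transaction. Each inclusion list holds at most $c_{Incl}$ transactions and the block at most $c_{block}$. Each includer chooses an inclusion list consisting of transactions from $M$ and/or fake transactions it creates; then the block producer, seeing all lists, chooses a block consisting of transactions from $M$ and/or fake transactions it creates. No party may add transactions to the mempool. Every transaction in an approved block pays burning fee $r\cdot s$ ($r\ge0$); for fake transactions this is paid by their creator. Processing costs are zero. Conditional inclusion lists: the attesters reject the block iff some transaction appearing in an inclusion list is missing from the block while the block contains fewer than $c_{block}$ transactions. Unconditional inclusion lists: the block is rejected iff some transaction in an inclusion list is missing from the block. If the block is rejected, the block producer and includers receive no fees. Payments: if $t_0$ is in an approved block, the block producer receives $f_{BP}\ge0$ from $t_0$ (whether or not $t_0$ is in a list); the includers collectively receive at most $f_{CM}\ge0$ from $t_0$, and only if $t_0$ is in some inclusion list and in the approved block. $sum$ denotes the block producer's total block rewards (sum of its fees from its block). An external briber pays the block producer $B_1$ if $t_0$ is not in its block, and pays includer $j$ the amount $B^j$ if $t_0$ is not in its inclusion list. Each player's utility is fees received plus bribes received minus burning fees paid for its own fake transactions in an approved block.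 *)

theory Defs
  imports Main "HOL.Real"
begin

(* Transactions: user transactions of the mempool (Mem t), and fake transactions
   Fake i k created by party i (i = 0: block producer, i = j in {1..m}: includer j),
   k being an index so that every party can create arbitrarily many fakes. *)
datatype 'a txn = Mem 'a | Fake nat nat

type_synonym 'a profile = "nat \<Rightarrow> 'a txn set"   (* inclusion list of includer j *)

(* Payment rule (left abstract): the block producer's fee from each non-target
   user transaction in its approved block (may depend on the inclusion lists),
   the includers' shares of the target's fee, and includers' other fees. *)
record 'a payrule =
  bp_fee :: "'a profile \<Rightarrow> 'a \<Rightarrow> real"
  incl_fee_t0 :: "nat \<Rightarrow> 'a profile \<Rightarrow> real"
  incl_fee_other :: "nat \<Rightarrow> 'a profile \<Rightarrow> 'a txn set \<Rightarrow> real"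

record 'a game =
  mempool :: "'a set"
  target :: 'a
  n_incl :: nat
  cap_incl :: nat
  cap_block :: nat
  tx_size :: real
  burn_rate :: real
  fee_BP :: real
  fee_CM :: real
  bribe_BP :: real
  bribe_incl :: "nat \<Rightarrow> real"
  payment :: "'a payrule"

definition fakes_of :: "nat \<Rightarrow> 'a txn set \<Rightarrow> 'a txn set" where
  "fakes_of i X = X \<inter> range (Fake i)"

definition valid_list :: "'a game \<Rightarrow> nat \<Rightarrow> 'a txn set \<Rightarrow> bool" where
  "valid_list G j L \<longleftrightarrow> finite L \<and> card L \<le> cap_incl G \<and>
     L \<subseteq> Mem ` mempool G \<union> range (Fake j)"

definition valid_profile :: "'a game \<Rightarrow> 'a profile \<Rightarrow> bool" where
  "valid_profile G Ls \<longleftrightarrow> (\<forall>j. (j \<in> {1..n_incl G} \<longrightarrow> valid_list G j (Ls j))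
      \<and> (j \<notin> {1..n_incl G} \<longrightarrow> Ls j = {}))"

definition valid_block :: "'a game \<Rightarrow> 'a txn set \<Rightarrow> bool" where
  "valid_block G b \<longleftrightarrow> finite b \<and> card b \<le> cap_block G \<and>
     b \<subseteq> Mem ` mempool G \<union> range (Fake 0)"

definition approved_cond :: "'a game \<Rightarrow> 'a profile \<Rightarrow> 'a txn set \<Rightarrow> bool" where
  "approved_cond G Ls b \<longleftrightarrow>
     \<not> ((\<exists>j\<in>{1..n_incl G}. \<exists>t\<in>Ls j. t \<notin> b) \<and> card b < cap_block G)"

definition admissible_payrule :: "'a game \<Rightarrow> bool" where
  "admissible_payrule G \<longleftrightarrow>
     (\<forall>Ls t. bp_fee (payment G) Ls t \<ge> 0) \<and>
     (\<forall>j Ls. incl_fee_t0 (payment G) j Ls \<ge> 0) \<and>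
     (\<forall>Ls. (\<Sum>j\<in>{1..n_incl G}. incl_fee_t0 (payment G) j Ls) \<le> fee_CM G)"

definition util_BP :: "'a game \<Rightarrow> 'a profile \<Rightarrow> 'a txn set \<Rightarrow> real" where
  "util_BP G Ls b =
     (if approved_cond G Ls b then
        (if Mem (target G) \<in> b then fee_BP G else 0)
        + (\<Sum>t\<in>{t\<in>mempool G. t \<noteq> target G \<and> Mem t \<in> b}. bp_fee (payment G) Ls t)
        - burn_rate G * tx_size G * real (card (fakes_of 0 b))
      else 0)
     + (if Mem (target G) \<notin> b then bribe_BP G else 0)"

definition util_incl :: "'a game \<Rightarrow> nat \<Rightarrow> 'a profile \<Rightarrow> 'a txn set \<Rightarrow> real" where
  "util_incl G j Ls b =
     (if approved_cond G Ls b then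
        (if Mem (target G) \<in> b \<and> (\<exists>i\<in>{1..n_incl G}. Mem (target G) \<in> Ls i)
           then incl_fee_t0 (payment G) j Ls else 0)
        + incl_fee_other (payment G) j Ls b
        - burn_rate G * tx_size G * real (card (fakes_of j b))
      else 0)
     + (if Mem (target G) \<notin> Ls j then bribe_incl G j else 0)"

definition valid_bp_strategy :: "'a game \<Rightarrow> ('a profile \<Rightarrow> 'a txn set) \<Rightarrow> bool" where
  "valid_bp_strategy G \<sigma> \<longleftrightarrow> (\<forall>Ls. valid_profile G Ls \<longrightarrow> valid_block G (\<sigma> Ls))"

definition is_NE :: "'a game \<Rightarrow> 'a profile \<Rightarrow> ('a profile \<Rightarrow> 'a txn set) \<Rightarrow> bool" where
  "is_NE G Ls \<sigma> \<longleftrightarrow> valid_profile G Ls \<and> valid_bp_strategy G \<sigma> \<and>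
     (\<forall>j\<in>{1..n_incl G}. \<forall>L. valid_list G j L \<longrightarrow>
        util_incl G j (Ls(j := L)) (\<sigma> (Ls(j := L))) \<le> util_incl G j Ls (\<sigma> Ls)) \<and>
     (\<forall>\<sigma>'. valid_bp_strategy G \<sigma>' \<longrightarrow> util_BP G Ls (\<sigma>' Ls) \<le> util_BP G Ls (\<sigma> Ls))"

end

theory Submission
  imports Defs
begin

lemma part1:
  fixes G :: "'a game"
  assumes fin: "finite (mempool G)"
    and tm: "target G \<in> mempool G"
    and ts: "tx_size G > 0"
    and br: "burn_rate G \<ge> 0"
    and fbp: "fee_BP G \<ge> 0"
    and adm: "admissible_payrule G"
    and bribe: "bribe_BP G > fee_BP G + burn_rate G * tx_size G *
           max (real (cap_block G) - real (card (mempool G)) + 1) 0"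
    and vb: "valid_block G b" and tb: "Mem (target G) \<in> b"
  shows "\<exists>b'. valid_block G b' \<and> approved_cond G Ls b' \<and> Mem (target G) \<notin> b' \<and>
                  util_BP G Ls b' > util_BP G Ls b"
proof -
  define t0 where "t0 = target G"
  define M0 where "M0 = mempool G - {t0}"
  define T where "T = {t\<in>mempool G. t \<noteq> t0 \<and> Mem t \<in> b}"
  define cap where "cap = cap_block G"
  define f where "f = bp_fee (payment G) Ls"
  have fnn: "\<And>t. f t \<ge> 0" using adm unfolding admissible_payrule_def f_def by auto
  have finb: "finite b" and cb: "card b \<le> cap" and bsub: "b \<subseteq> Mem ` mempool G \<union> range (Fake 0)"
    using vb unfolding valid_block_def cap_def by auto
  have finM0: "finite M0" using fin M0_def by auto
  have cM0: "card M0 = card (mempool G) - 1" using fin tm unfolding M0_def t0_def by simp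
  have TM0: "T \<subseteq> M0" unfolding T_def M0_def by auto
  have finT: "finite T" using finM0 TM0 finite_subset by blast
  have "Mem ` T \<subseteq> b - {Mem t0}" unfolding T_def by auto
  hence "card (Mem ` T) \<le> card (b - {Mem t0})" using finb by (intro card_mono) auto
  moreover have "card (Mem ` T) = card T" by (rule card_image) (simp add: inj_on_def)
  moreover have "card (b - {Mem t0}) = card b - 1" using tb t0_def by simp
  moreover have "card b \<ge> 1" using finb tb card_0_eq by fastforce
  ultimately have cT: "card T < cap" using cb by linarith
  have cTM0: "card T \<le> card M0" using TM0 finM0 card_mono by blast
  define n where "n = min cap (card M0) - card T"
  have "n \<le> card (M0 - T)" using cTM0 finT TM0 by (simp add: n_def card_Diff_subset)
  then obtain U where U: "U \<subseteq> M0 - T" "card U = n" using obtain_subset_with_card_n by metis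
  define S where "S = T \<union> U"
  have SM0: "S \<subseteq> M0" using U TM0 S_def by auto
  have finS: "finite S" using SM0 finM0 finite_subset by blast
  have finU: "finite U" using finS S_def by auto
  have cS: "card S = min cap (card M0)"
  proof -
    have "T \<inter> U = {}" using U by auto
    hence "card (T \<union> U) = card T + card U" using finT finU card_Un_disjoint by blast
    thus ?thesis using U cT cTM0 unfolding S_def n_def by simp
  qed
  define k where "k = cap - card S"
  define F where "F = (Fake 0 ` {..<k} :: 'a txn set)"
  have cF: "card F = k" unfolding F_def by (simp add: card_image inj_on_def)
  define b' where "b' = Mem ` S \<union> F"
  have cMS: "card (Mem ` S) = card S" by (rule card_image) (simp add: inj_on_def)
  have disj: "Mem ` S \<inter> F = {}" unfolding F_def by auto
  have cb': "card b' = cap" unfolding b'_def using finS disj cMS cF k_def cS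
    by (simp add: card_Un_disjoint F_def)
  have finb': "finite b'" unfolding b'_def F_def using finS by simp
  have vb': "valid_block G b'" unfolding valid_block_def
    using finb' cb' SM0 M0_def cap_def unfolding b'_def F_def by auto
  have ap': "approved_cond G Ls b'" unfolding approved_cond_def using cb' cap_def by simp
  have nt': "Mem (target G) \<notin> b'" using SM0 unfolding b'_def F_def M0_def t0_def by auto
  have setb': "{t\<in>mempool G. t \<noteq> target G \<and> Mem t \<in> b'} = S"
    using SM0 unfolding b'_def F_def M0_def t0_def by auto
  have fk: "fakes_of 0 b' = F" unfolding fakes_of_def b'_def F_def by auto
  have sumST: "sum f T \<le> sum f S" using finS fnn S_def by (intro sum_mono2) auto
  have sumT0: "sum f T \<ge> 0" using fnn by (simp add: sum_nonneg)
  have kle: "real k \<le> max (real (cap_block G) - real (card (mempool G)) + 1) 0"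
    using cS cM0 unfolding k_def cap_def by auto
  have rs: "burn_rate G * tx_size G \<ge> 0" using br ts by simp
  hence kle2: "burn_rate G * tx_size G * real k \<le> burn_rate G * tx_size G *
      max (real (cap_block G) - real (card (mempool G)) + 1) 0"
    using kle mult_left_mono by blast
  have u': "util_BP G Ls b' = sum f S - burn_rate G * tx_size G * real k + bribe_BP G"
    unfolding util_BP_def using ap' nt' setb' fk cF f_def by simp
  have Teq: "{t\<in>mempool G. t \<noteq> target G \<and> Mem t \<in> b} = T" unfolding T_def t0_def by simp
  have fakenn: "burn_rate G * tx_size G * real (card (fakes_of 0 b)) \<ge> 0" using rs by simp
  have ub: "util_BP G Ls b \<le> fee_BP G + sum f T"
    unfolding util_BP_def using tb Teq f_def fakenn sumT0 fbp by auto
  have "util_BP G Ls b' > util_BP G Ls b" using u' ub sumST kle2 bribe by linarith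
  thus ?thesis using vb' ap' nt' by blast
qed

theorem mainTheorem6:
  fixes G :: "'a game"
  assumes "finite (mempool G)"
    and "target G \<in> mempool G"
    and "tx_size G > 0"
    and "burn_rate G \<ge> 0"
    and "fee_BP G \<ge> 0"
    and "fee_CM G \<ge> 0"
    and "admissible_payrule G"
    and "bribe_BP G > fee_BP G + burn_rate G * tx_size G *
           max (real (cap_block G) - real (card (mempool G)) + 1) 0"
  shows "(\<forall>Ls b. valid_profile G Ls \<and> valid_block G b \<and> Mem (target G) \<in> b \<longrightarrow>
            (\<exists>b'. valid_block G b' \<and> approved_cond G Ls b' \<and> Mem (target G) \<notin> b' \<and>
                  util_BP G Ls b' > util_BP G Ls b))
       \<and> (\<forall>Ls \<sigma>. is_NE G Ls \<sigma> \<longrightarrow> Mem (target G) \<notin> \<sigma> Ls)"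
proof (intro conjI allI impI)
  fix Ls b assume "valid_profile G Ls \<and> valid_block G b \<and> Mem (target G) \<in> b"
  then show "\<exists>b'. valid_block G b' \<and> approved_cond G Ls b' \<and> Mem (target G) \<notin> b' \<and>
                  util_BP G Ls b' > util_BP G Ls b"
    using part1[OF assms(1-5) assms(7-8)] by blast
next
  fix Ls \<sigma> assume ne: "is_NE G Ls \<sigma>"
  show "Mem (target G) \<notin> \<sigma> Ls"
  proof
    assume tin: "Mem (target G) \<in> \<sigma> Ls"
    have vp: "valid_profile G Ls" and vs: "valid_bp_strategy G \<sigma>" using ne is_NE_def by auto
    have "valid_block G (\<sigma> Ls)" using vp vs valid_bp_strategy_def by auto
    then obtain b' where b': "valid_block G b'" "util_BP G Ls b' > util_BP G Ls (\<sigma> Ls)"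
      using part1[OF assms(1-5) assms(7-8)] tin by blast
    define \<sigma>' where "\<sigma>' = (\<lambda>L. if L = Ls then b' else {})"
    have "valid_bp_strategy G \<sigma>'"
      unfolding valid_bp_strategy_def \<sigma>'_def using b'(1) by (auto simp: valid_block_def)
    hence "util_BP G Ls (\<sigma>' Ls) \<le> util_BP G Ls (\<sigma> Ls)" using ne is_NE_def by blast
    thus False using b'(2) \<sigma>'_def by simp
  qed
qed

end
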